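(* Let $D$ be a friendship digraph. Then $D$ is a fancy wheel digraph or a regular digraph. Moreover, if $D$ is a regular digraph, then $D$ has $k^2-k+1$ vertices for some integer $k\geq 2$, where $k$ is the outdegree of each vertex of $D$.
   Context: All digraphs are finite and have neither loops nor parallel arcs (a pair of opposite arcs $(u,v)$ and $(v,u)$ is allowed). For a vertex $v$, $N^+(v)$ and $N^-(v)$ denote the sets of out-neighbors and in-neighbors of $v$. A friendship digraph is a nontrivial digraph (at least two vertices) in which any two distinct vertices have exactly one common out-neighbor. A fancy wheel digraph is a digraph $D$ such that (W1) $D$ has exactly one vertex $v$ with $N^+(v)=N^-(v)=V(D)-\{v\}$, and (W2) $D-v$ is a vertex-disjoint union of directed cycles. For a positive integer $k$, a $k$-regular digraph is one in which every vertex has outdegree $k$ and indegree $k$; a digraph is regular if it is $k$-regular for some positive integer $k$. *)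

theory Defs
  imports Main
begin

text \<open>A digraph is given by a finite vertex set V and an arc relation A \<subseteq> V \<times> V
  without loops. Parallel arcs cannot occur (A is a set); opposite arcs are allowed.\<close>

definition digraph :: "'a set \<Rightarrow> ('a \<times> 'a) set \<Rightarrow> bool" where
  "digraph V A \<longleftrightarrow> finite V \<and> A \<subseteq> V \<times> V \<and> (\<forall>v. (v, v) \<notin> A)"

definition out_nbrs :: "('a \<times> 'a) set \<Rightarrow> 'a \<Rightarrow> 'a set" where
  "out_nbrs A v = {w. (v, w) \<in> A}"

definition in_nbrs :: "('a \<times> 'a) set \<Rightarrow> 'a \<Rightarrow> 'a set" where
  "in_nbrs A v = {u. (u, v) \<in> A}"

definition friendship_digraph :: "'a set \<Rightarrow> ('a \<times> 'a) set \<Rightarrow> bool" where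
  "friendship_digraph V A \<longleftrightarrow> digraph V A \<and> card V \<ge> 2 \<and>
     (\<forall>u\<in>V. \<forall>v\<in>V. u \<noteq> v \<longrightarrow> (\<exists>!w. w \<in> out_nbrs A u \<and> w \<in> out_nbrs A v))"

definition directed_cycle :: "'a set \<Rightarrow> ('a \<times> 'a) set \<Rightarrow> bool" where
  "directed_cycle W B \<longleftrightarrow> (\<exists>xs. distinct xs \<and> length xs \<ge> 2 \<and> set xs = W \<and>
     B = {(xs ! i, xs ! ((i + 1) mod length xs)) | i. i < length xs})"

definition disjoint_union_of_cycles :: "'a set \<Rightarrow> ('a \<times> 'a) set \<Rightarrow> bool" where
  "disjoint_union_of_cycles W B \<longleftrightarrow> (\<exists>P. (\<Union>P = W) \<and>
     (\<forall>C\<in>P. \<forall>C'\<in>P. C \<noteq> C' \<longrightarrow> C \<inter> C' = {}) \<and>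
     (\<forall>C\<in>P. directed_cycle C (B \<inter> (C \<times> C))) \<and>
     B = (\<Union>C\<in>P. B \<inter> (C \<times> C)))"

definition fancy_wheel :: "'a set \<Rightarrow> ('a \<times> 'a) set \<Rightarrow> bool" where
  "fancy_wheel V A \<longleftrightarrow> digraph V A \<and>
     (\<exists>!v. v \<in> V \<and> out_nbrs A v = V - {v} \<and> in_nbrs A v = V - {v}) \<and>
     (\<forall>v\<in>V. out_nbrs A v = V - {v} \<and> in_nbrs A v = V - {v} \<longrightarrow>
        disjoint_union_of_cycles (V - {v}) (A \<inter> ((V - {v}) \<times> (V - {v}))))"

definition k_regular :: "nat \<Rightarrow> 'a set \<Rightarrow> ('a \<times> 'a) set \<Rightarrow> bool" where
  "k_regular k V A \<longleftrightarrow> digraph V A \<and>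
     (\<forall>v\<in>V. card (out_nbrs A v) = k \<and> card (in_nbrs A v) = k)"

definition regular_digraph :: "'a set \<Rightarrow> ('a \<times> 'a) set \<Rightarrow> bool" where
  "regular_digraph V A \<longleftrightarrow> (\<exists>k>0. k_regular k V A)"

end

theory Submission
  imports Defs Complex_Main "HOL-Combinatorics.Orbits"
begin


lemma orbit_same:
  assumes "x \<in> orbit f x" "z \<in> orbit f x"
  shows "orbit f z = orbit f x"
proof
  show "orbit f z \<subseteq> orbit f x"
  proof
    fix t assume "t \<in> orbit f z"
    then show "t \<in> orbit f x" by (rule orbit_trans) (rule assms(2))
  qed
  have xz: "x \<in> orbit f z" by (rule orbit_swap[OF assms])
  show "orbit f x \<subseteq> orbit f z"
  proof
    fix t assume "t \<in> orbit f x"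
    then show "t \<in> orbit f z" by (rule orbit_trans) (rule xz)
  qed
qed

lemma cycle_decomp:
  assumes fin: "finite W" and perm: "f permutes W" and nfix: "\<forall>x\<in>W. f x \<noteq> x"
  shows "disjoint_union_of_cycles W {(x, f x) | x. x \<in> W}"
proof -
  define B where "B = {(x, f x) | x. x \<in> W}"
  have pm: "permutation f" using permutes_imp_permutation fin perm by blast
  have self: "\<And>x. x \<in> orbit f x" using permutation_self_in_orbit[OF pm] .
  have sub: "\<And>x. x \<in> W \<Longrightarrow> orbit f x \<subseteq> W" using permutes_orbit_subset[OF perm] by blast
  have fW: "\<And>x. x \<in> W \<Longrightarrow> f x \<in> W" using perm by (simp add: permutes_in_image)
  define P where "P = orbit f ` W"
  have cyc: "directed_cycle (orbit f x) (B \<inter> (orbit f x \<times> orbit f x))" if xW: "x \<in> W" for x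
  proof -
    define p where "p = funpow_dist1 f x x"
    define xs where "xs = map (\<lambda>n. (f ^^ n) x) [0..<p]"
    have pp: "(f ^^ p) x = x" unfolding p_def using funpow_dist1_prop[OF self] .
    have p1: "p \<noteq> 1" using pp nfix xW by auto
    have p2: "p \<ge> 2" using p1 unfolding p_def by linarith
    have inj: "inj_on (\<lambda>n. (f ^^ n) x) {0..<p}" unfolding p_def by (rule inj_on_funpow_dist1[OF self])
    have dist: "distinct xs" unfolding xs_def using inj
      by (simp add: distinct_map)
    have orb: "orbit f x = (\<lambda>n. (f ^^ n) x) ` {0..<p}" unfolding p_def by (rule orbit_conv_funpow_dist1[OF self])
    have setxs: "set xs = orbit f x" unfolding xs_def orb by simp
    have len: "length xs = p" unfolding xs_def by simp
    have nth: "\<And>i. i < p \<Longrightarrow> xs ! i = (f ^^ i) x" unfolding xs_def by simp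
    have "B \<inter> (orbit f x \<times> orbit f x) = {(xs ! i, xs ! ((i + 1) mod length xs)) | i. i < length xs}"
    proof (intro set_eqI iffI)
      fix ab assume "ab \<in> B \<inter> (orbit f x \<times> orbit f x)"
      then have abB: "ab \<in> B" and abO: "ab \<in> orbit f x \<times> orbit f x" by auto
      from abB obtain a where ab0: "ab = (a, f a)" unfolding B_def by auto
      have ab: "ab = (a, f a)" "a \<in> orbit f x" using ab0 abO by auto
      have "a \<in> set xs" using setxs ab(2) by simp
      then obtain i where i0: "i < length xs" "xs ! i = a" by (auto simp: in_set_conv_nth)
      have ip: "i < p" using i0(1) len by simp
      have i: "i < p" "a = (f ^^ i) x" using ip nth[OF ip] i0(2) by auto
      have "f a = (f ^^ (Suc i)) x" using i by simp
      also have "\<dots> = (f ^^ ((i+1) mod p)) x" using funpow_mod_eq[OF pp] by simp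
      finally have "f a = xs ! ((i + 1) mod length xs)" using nth len p2 by simp
      moreover have "a = xs ! i" using i0(2) by simp
      ultimately have hh: "ab = (xs ! i, xs ! ((i + 1) mod length xs))" using ab(1) by simp
      show "ab \<in> {(xs ! i, xs ! ((i + 1) mod length xs)) | i. i < length xs}"
        using hh i0(1) by blast
    next
      fix ab assume "ab \<in> {(xs ! i, xs ! ((i + 1) mod length xs)) | i. i < length xs}"
      then obtain i where i1: "i < length xs" "ab = (xs ! i, xs ! ((i + 1) mod length xs))" by blast
      have i: "i < p" "ab = (xs ! i, xs ! ((i + 1) mod p))" using i1 len by simp_all
      have a: "xs ! i = (f ^^ i) x" using nth i by simp
      have "xs ! ((i + 1) mod p) = (f ^^ ((i+1) mod p)) x" using nth p2 by simp
      also have "\<dots> = f ((f ^^ i) x)" using funpow_mod_eq[OF pp] by simp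
      finally have b: "xs ! ((i + 1) mod p) = f (xs ! i)" using a by simp
      have ain: "xs ! i \<in> orbit f x" using setxs i len nth_mem by metis
      have "f (xs ! i) \<in> orbit f x" using ain orbit_trans orbit.base by metis
      moreover have "xs ! i \<in> W" using ain sub[OF xW] by blast
      moreover have "(xs ! i, f (xs ! i)) \<in> B" unfolding B_def using \<open>xs ! i \<in> W\<close> by blast
      ultimately have "(xs ! i, f (xs ! i)) \<in> B \<inter> (orbit f x \<times> orbit f x)" using ain by simp
      then show "ab \<in> B \<inter> (orbit f x \<times> orbit f x)" using b i(2) by simp
    qed
    then show ?thesis unfolding directed_cycle_def using dist setxs len p2
      by (intro exI[of _ xs]) simp
  qed
  show ?thesis unfolding disjoint_union_of_cycles_def B_def[symmetric]
  proof (intro exI[of _ P] conjI ballI impI)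
    show "\<Union>P = W"
    proof
      show "\<Union>P \<subseteq> W" unfolding P_def using sub by blast
      show "W \<subseteq> \<Union>P"
      proof
        fix y assume "y \<in> W"
        then have "orbit f y \<in> P" unfolding P_def by simp
        then show "y \<in> \<Union>P" using self[of y] by blast
      qed
    qed
  next
    fix C C' assume "C \<in> P" "C' \<in> P" "C \<noteq> C'"
    then obtain y y' where C: "C = orbit f y" "C' = orbit f y'" unfolding P_def by blast
    show "C \<inter> C' = {}"
    proof (rule ccontr)
      assume "C \<inter> C' \<noteq> {}"
      then obtain z where "z \<in> orbit f y" "z \<in> orbit f y'" using C by blast
      then have "orbit f z = orbit f y" "orbit f z = orbit f y'"
        using orbit_same[OF self[of y]] orbit_same[OF self[of y']] by blast+
      then show False using C \<open>C \<noteq> C'\<close> by simp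
    qed
  next
    fix C assume "C \<in> P"
    then obtain y where "y \<in> W" "C = orbit f y" unfolding P_def by blast
    then show "directed_cycle C (B \<inter> (C \<times> C))" using cyc by simp
  next
    show "B = (\<Union>C\<in>P. B \<inter> (C \<times> C))"
    proof
      show "B \<subseteq> (\<Union>C\<in>P. B \<inter> (C \<times> C))"
      proof
        fix ab assume "ab \<in> B"
        then obtain a where a: "ab = (a, f a)" "a \<in> W" unfolding B_def by blast
        have "orbit f a \<in> P" unfolding P_def using a by simp
        moreover have "ab \<in> orbit f a \<times> orbit f a" using a self orbit.base by simp
        ultimately show "ab \<in> (\<Union>C\<in>P. B \<inter> (C \<times> C))" using \<open>ab \<in> B\<close> by blast
      qed
      show "(\<Union>C\<in>P. B \<inter> (C \<times> C)) \<subseteq> B" by (rule UN_least) (rule Int_lower1)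
    qed
  qed
qed



lemma card_filter_sum:
  assumes "finite S"
  shows "card {x \<in> S. P x} = (\<Sum>x\<in>S. if P x then 1 else 0 :: nat)"
proof -
  have "(\<Sum>x\<in>S. if P x then 1 else 0 :: nat) = (\<Sum>x\<in>{x \<in> S. P x}. 1)"
    using sum.inter_filter[OF assms, of "\<lambda>x. 1::nat" P] by simp
  then show ?thesis by simp
qed

locale fd =
  fixes V :: "'a set" and A :: "('a \<times> 'a) set"
  assumes fr: "friendship_digraph V A"
begin

abbreviation "N \<equiv> out_nbrs A"
abbreviation "M \<equiv> in_nbrs A"
abbreviation "n \<equiv> card V"
abbreviation "d u \<equiv> card (out_nbrs A u)"
abbreviation "e u \<equiv> card (in_nbrs A u)"

lemma dg: "digraph V A" using fr unfolding friendship_digraph_def by blast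
lemma fin: "finite V" using dg unfolding digraph_def by blast
lemma AV: "A \<subseteq> V \<times> V" using dg unfolding digraph_def by blast
lemma noloop: "(v, v) \<notin> A" using dg unfolding digraph_def by blast
lemma n2: "n \<ge> 2" using fr unfolding friendship_digraph_def by blast
lemma uniq: "u \<in> V \<Longrightarrow> v \<in> V \<Longrightarrow> u \<noteq> v \<Longrightarrow> \<exists>!w. w \<in> N u \<and> w \<in> N v"
  using fr unfolding friendship_digraph_def by blast

lemma Nsub: "N u \<subseteq> V" using AV unfolding out_nbrs_def by blast
lemma Msub: "M u \<subseteq> V" using AV unfolding in_nbrs_def by blast
lemma Nself: "u \<notin> N u" using noloop unfolding out_nbrs_def by blast
lemma Mself: "u \<notin> M u" using noloop unfolding in_nbrs_def by blast
lemma finN: "finite (N u)" using Nsub fin finite_subset by blast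
lemma finM: "finite (M u)" using Msub fin finite_subset by blast
lemma memN: "w \<in> N u \<longleftrightarrow> (u, w) \<in> A" unfolding out_nbrs_def by simp
lemma memM: "w \<in> M u \<longleftrightarrow> (w, u) \<in> A" unfolding in_nbrs_def by simp

lemma inter1:
  assumes "u \<in> V" "v \<in> V" "u \<noteq> v"
  shows "\<exists>w. N u \<inter> N v = {w}"
proof -
  obtain w where w: "w \<in> N u" "w \<in> N v" "\<And>y. y \<in> N u \<and> y \<in> N v \<Longrightarrow> y = w"
    using uniq[OF assms] by blast
  then have "N u \<inter> N v = {w}" by blast
  then show ?thesis by blast
qed

lemma card_inter1:
  assumes "u \<in> V" "v \<in> V" "u \<noteq> v"
  shows "card (N u \<inter> N v) = 1"
  using inter1[OF assms] by auto

lemma dlt: assumes "u \<in> V" shows "d u < n"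
proof -
  have "N u \<subseteq> V - {u}" using Nsub Nself by blast
  then have "d u \<le> card (V - {u})" using fin by (intro card_mono) auto
  also have "\<dots> = n - 1" using fin \<open>u \<in> V\<close> by (simp add: card_Diff_singleton_if)
  finally show ?thesis using n2 by linarith
qed

lemma elt: assumes "u \<in> V" shows "e u < n"
proof -
  have "M u \<subseteq> V - {u}" using Msub Mself by blast
  then have "e u \<le> card (V - {u})" using fin by (intro card_mono) auto
  also have "\<dots> = n - 1" using fin \<open>u \<in> V\<close> by (simp add: card_Diff_singleton_if)
  finally show ?thesis using n2 by linarith
qed

lemma key1:
  assumes u: "u \<in> V"
  shows "(\<Sum>w\<in>N u. e w) = n - 1 + d u"
proof -
  have Mw: "\<And>w. M w = {v \<in> V. (v, w) \<in> A}" using Msub memM by blast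
  have "(\<Sum>w\<in>N u. e w) = (\<Sum>w\<in>N u. \<Sum>v\<in>V. if (v, w) \<in> A then 1 else 0 :: nat)"
    using Mw card_filter_sum[OF fin] by simp
  also have "\<dots> = (\<Sum>v\<in>V. \<Sum>w\<in>N u. if (v, w) \<in> A then 1 else 0 :: nat)"
    by (rule sum.swap)
  also have "\<dots> = (\<Sum>v\<in>V. card (N u \<inter> N v))"
  proof (rule sum.cong[OF refl])
    fix v assume "v \<in> V"
    have "N u \<inter> N v = {w \<in> N u. (v, w) \<in> A}" using memN by blast
    then show "(\<Sum>w\<in>N u. if (v, w) \<in> A then 1 else 0 :: nat) = card (N u \<inter> N v)"
      using card_filter_sum[OF finN] by simp
  qed
  also have "\<dots> = card (N u \<inter> N u) + (\<Sum>v\<in>V - {u}. card (N u \<inter> N v))"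
    using sum.remove[OF fin u, of "\<lambda>v. card (N u \<inter> N v)"] by simp
  also have "(\<Sum>v\<in>V - {u}. card (N u \<inter> N v)) = (\<Sum>v\<in>V - {u}. 1)"
    using card_inter1 u by (intro sum.cong) auto
  also have "\<dots> = n - 1" using fin u by simp
  finally show ?thesis by simp
qed

lemma key2:
  assumes u: "u \<in> V" and w: "w \<in> V" and nuw: "(u, w) \<notin> A"
  shows "e w \<le> d u"
proof -
  have "\<forall>v\<in>M w. \<exists>x. N u \<inter> N v = {x}"
  proof
    fix v assume v: "v \<in> M w"
    then have "v \<in> V" "v \<noteq> u" using Msub nuw memM by auto
    then show "\<exists>x. N u \<inter> N v = {x}" using inter1 u by blast
  qed
  then obtain g where g: "\<And>v. v \<in> M w \<Longrightarrow> N u \<inter> N v = {g v}" by metis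
  have "inj_on g (M w)"
  proof (rule inj_onI)
    fix v v' assume v: "v \<in> M w" and v': "v' \<in> M w" and eq: "g v = g v'"
    show "v = v'"
    proof (rule ccontr)
      assume ne: "v \<noteq> v'"
      have vV: "v \<in> V" "v' \<in> V" using v v' Msub by auto
      obtain y where y: "N v \<inter> N v' = {y}" using inter1[OF vV ne] by blast
      have "w \<in> N v \<inter> N v'" using v v' memM memN by auto
      moreover have "g v \<in> N v \<inter> N v'" using g[OF v] g[OF v'] eq by blast
      ultimately have "g v = w" using y by auto
      moreover have "g v \<in> N u" using g[OF v] by blast
      ultimately show False using nuw memN by auto
    qed
  qed
  moreover have "g ` M w \<subseteq> N u" using g by blast
  ultimately show ?thesis using card_inj_on_le finN by blast
qed

lemma key3:
  assumes u: "u \<in> V" and w: "w \<in> V" and nuw: "(u, w) \<notin> A"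
  shows "e w = d u"
proof -
  define a where "a = (\<lambda>u. real n - real (d u))"
  define b where "b = (\<lambda>w. real n - real (e w))"
  have apos: "\<And>u. u \<in> V \<Longrightarrow> a u > 0" unfolding a_def using dlt by simp
  have bpos: "\<And>w. w \<in> V \<Longrightarrow> b w > 0" unfolding b_def using elt by simp
  have inner: "(\<Sum>w\<in>V. if (u, w) \<in> A then 0 else c) = real (card {w \<in> V. (u, w) \<notin> A}) * c"
    for u and c :: real
  proof -
    have "(\<Sum>w\<in>V. if (u, w) \<in> A then 0 else c) = (\<Sum>w\<in>V. if (u, w) \<notin> A then c else 0)"
      by (intro sum.cong) auto
    also have "\<dots> = (\<Sum>w\<in>{w \<in> V. (u, w) \<notin> A}. c)"
      using sum.inter_filter[OF fin, of "\<lambda>_. c" "\<lambda>w. (u, w) \<notin> A"] by simp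
    finally show ?thesis by simp
  qed
  have inner2: "(\<Sum>u\<in>V. if (u, w) \<in> A then 0 else c) = real (card {u \<in> V. (u, w) \<notin> A}) * c"
    for w and c :: real
  proof -
    have "(\<Sum>u\<in>V. if (u, w) \<in> A then 0 else c) = (\<Sum>u\<in>V. if (u, w) \<notin> A then c else 0)"
      by (intro sum.cong) auto
    also have "\<dots> = (\<Sum>u\<in>{u \<in> V. (u, w) \<notin> A}. c)"
      using sum.inter_filter[OF fin, of "\<lambda>_. c" "\<lambda>u. (u, w) \<notin> A"] by simp
    finally show ?thesis by simp
  qed
  have cardN: "real (card {w \<in> V. (u, w) \<notin> A}) = a u" for u
  proof -
    have "{w \<in> V. (u, w) \<notin> A} = V - N u" using Nsub memN by blast
    then have "card {w \<in> V. (u, w) \<notin> A} = n - d u" using card_Diff_subset[OF finN Nsub] by simp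
    moreover have "d u \<le> n" using card_mono[OF fin Nsub] .
    ultimately show ?thesis unfolding a_def by simp
  qed
  have cardM: "real (card {u \<in> V. (u, w) \<notin> A}) = b w" for w
  proof -
    have "{u \<in> V. (u, w) \<notin> A} = V - M w" using Msub memM by blast
    then have "card {u \<in> V. (u, w) \<notin> A} = n - e w" using card_Diff_subset[OF finM Msub] by simp
    moreover have "e w \<le> n" using card_mono[OF fin Msub] .
    ultimately show ?thesis unfolding b_def by simp
  qed
  have S1: "(\<Sum>u\<in>V. \<Sum>w\<in>V. if (u, w) \<in> A then 0 else 1 / a u) = real n"
  proof -
    have "(\<Sum>u\<in>V. \<Sum>w\<in>V. if (u, w) \<in> A then 0 else 1 / a u) = (\<Sum>u\<in>V. 1)"
    proof (rule sum.cong[OF refl])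
      fix u assume "u \<in> V"
      then have "a u > 0" using apos by simp
      then show "(\<Sum>w\<in>V. if (u, w) \<in> A then 0 else 1 / a u) = 1"
        using inner[of u "1 / a u"] cardN[of u] by simp
    qed
    then show ?thesis by simp
  qed
  have S2: "(\<Sum>u\<in>V. \<Sum>w\<in>V. if (u, w) \<in> A then 0 else 1 / b w) = real n"
  proof -
    have "(\<Sum>u\<in>V. \<Sum>w\<in>V. if (u, w) \<in> A then 0 else 1 / b w)
        = (\<Sum>w\<in>V. \<Sum>u\<in>V. if (u, w) \<in> A then 0 else 1 / b w)"
      by (rule sum.swap)
    also have "\<dots> = (\<Sum>w\<in>V. 1)"
    proof (rule sum.cong[OF refl])
      fix w assume "w \<in> V"
      then have "b w > 0" using bpos by simp
      then show "(\<Sum>u\<in>V. if (u, w) \<in> A then 0 else 1 / b w) = 1"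
        using inner2[of w "1 / b w"] cardM[of w] by simp
    qed
    finally show ?thesis by simp
  qed
  define t where "t = (\<lambda>u w. (if (u, w) \<in> A then 0 else 1 / a u) - (if (u, w) \<in> A then 0 else 1 / b w))"
  have tsum: "(\<Sum>u\<in>V. \<Sum>w\<in>V. t u w) = 0"
    unfolding t_def sum_subtractf using S1 S2 by simp
  have tnn: "t u w \<ge> 0" if "u \<in> V" "w \<in> V" for u w
  proof (cases "(u, w) \<in> A")
    case True then show ?thesis unfolding t_def by simp
  next
    case False
    have "e w \<le> d u" using key2[OF that False] .
    then have "a u \<le> b w" unfolding a_def b_def by simp
    moreover have "a u > 0" using apos that by simp
    ultimately have "1 / b w \<le> 1 / a u" by (intro divide_left_mono) auto
    then show ?thesis unfolding t_def using False by simp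
  qed
  have innn: "(\<Sum>w\<in>V. t u w) \<ge> 0" if "u \<in> V" for u using tnn that by (intro sum_nonneg) auto
  have e1: "(\<Sum>u\<in>V. \<Sum>w\<in>V. t u w) = 0 \<longleftrightarrow> (\<forall>u\<in>V. (\<Sum>w\<in>V. t u w) = 0)"
    by (rule sum_nonneg_eq_0_iff[OF fin]) (rule innn)
  have "(\<Sum>w\<in>V. t u w) = 0" using e1 tsum u by simp
  moreover have e2: "(\<Sum>w\<in>V. t u w) = 0 \<longleftrightarrow> (\<forall>w\<in>V. t u w = 0)"
    by (rule sum_nonneg_eq_0_iff[OF fin]) (rule tnn[OF u])
  ultimately have "t u w = 0" using w by simp
  then have "1 / a u = 1 / b w" unfolding t_def using nuw by simp
  then have "a u = b w" by simp
  then show ?thesis unfolding a_def b_def by simp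
qed

lemma ed: assumes "u \<in> V" shows "e u = d u"
  using key3[OF assms assms noloop] .

lemma notin_deg: assumes "u \<in> V" "w \<in> V" "(u, w) \<notin> A" shows "d w = d u"
  using key3[OF assms] ed[OF assms(2)] by simp

lemma cov: assumes "u \<in> V" "v \<in> V" "d u \<noteq> d v" "w \<in> V" shows "(u, w) \<in> A \<or> (v, w) \<in> A"
proof (rule ccontr)
  assume "\<not> ((u, w) \<in> A \<or> (v, w) \<in> A)"
  then have "e w = d u" "e w = d v" using key3[OF assms(1) assms(4)] key3[OF assms(2) assms(4)] by auto
  then show False using assms(3) by simp
qed

lemma sum_deg: assumes u: "u \<in> V" and v: "v \<in> V" and ne: "d u \<noteq> d v" shows "d u + d v = n + 1"
proof -
  have uv: "u \<noteq> v" using ne by blast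
  have "N u \<union> N v = V" using Nsub cov[OF u v ne] memN by blast
  moreover have "card (N u \<inter> N v) = 1" using card_inter1[OF u v uv] .
  ultimately show ?thesis using card_Un_Int[OF finN finN, of u v] by simp
qed

lemma center_exists:
  assumes u0: "u0 \<in> V" and v0: "v0 \<in> V" and ne0: "d u0 \<noteq> d v0"
  shows "\<exists>c\<in>V. \<forall>z\<in>V. z \<noteq> c \<longrightarrow> (c, z) \<in> A \<and> d z \<noteq> d c"
proof (cases "\<exists>x1\<in>V. x1 \<noteq> u0 \<and> d x1 = d u0")
  case True
  then obtain x1 where x1: "x1 \<in> V" "x1 \<noteq> u0" "d x1 = d u0" by blast
  obtain w where w: "N u0 \<inter> N x1 = {w}" using inter1[OF u0 x1(1)] x1(2) by metis
  have inN: "y \<in> N u0 \<inter> N x1" if y: "y \<in> V" "d y \<noteq> d u0" for y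
  proof -
    have "(u0, y) \<in> A"
    proof (rule ccontr)
      assume "(u0, y) \<notin> A" then have "d y = d u0" using notin_deg[OF u0 y(1)] by simp
      then show False using y(2) by simp
    qed
    moreover have "(x1, y) \<in> A"
    proof (rule ccontr)
      assume "(x1, y) \<notin> A" then have "d y = d x1" using notin_deg[OF x1(1) y(1)] by simp
      then show False using y(2) x1(3) by simp
    qed
    ultimately show ?thesis using memN by simp
  qed
  have Y: "y = v0" if y: "y \<in> V" "d y \<noteq> d u0" for y
  proof -
    have "y \<in> {w}" using inN[OF y] w by simp
    moreover have "v0 \<in> {w}" using inN[OF v0] ne0 w by simp
    ultimately show ?thesis by simp
  qed
  show ?thesis
  proof (intro bexI[of _ v0] ballI impI conjI)
    fix z assume z: "z \<in> V" "z \<noteq> v0"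
    then have dz: "d z = d u0" using Y by blast
    then show "d z \<noteq> d v0" using ne0 by simp
    show "(v0, z) \<in> A"
    proof (rule ccontr)
      assume "(v0, z) \<notin> A" then have "d z = d v0" using notin_deg[OF v0 z(1)] by simp
      then show False using dz ne0 by simp
    qed
  qed (rule v0)
next
  case False
  show ?thesis
  proof (intro bexI[of _ u0] ballI impI conjI)
    fix z assume z: "z \<in> V" "z \<noteq> u0"
    then show dz: "d z \<noteq> d u0" using False by blast
    show "(u0, z) \<in> A"
    proof (rule ccontr)
      assume "(u0, z) \<notin> A" then have "d z = d u0" using notin_deg[OF u0 z(1)] by simp
      then show False using dz by simp
    qed
  qed (rule u0)
qed

lemma reg_count:
  assumes "k_regular k V A"
  shows "k \<ge> 2 \<and> n = k ^ 2 - k + 1"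
proof -
  have kk: "\<forall>v\<in>V. d v = k \<and> e v = k" using assms unfolding k_regular_def by blast
  have "V \<noteq> {}" using n2 by auto
  then obtain u where u: "u \<in> V" by blast
  have "(\<Sum>w\<in>N u. e w) = (\<Sum>w\<in>N u. k)" using kk Nsub by (intro sum.cong) auto
  then have "k * k = n - 1 + k" using key1[OF u] kk u by simp
  then have eq: "k * k + 1 = n + k" using n2 by simp
  have k2: "k \<ge> 2"
  proof (rule ccontr)
    assume "\<not> k \<ge> 2"
    then have "k = 0 \<or> k = 1" by linarith
    then show False using eq n2 by auto
  qed
  have "k \<le> k * k" by simp
  then have "k * k - k + 1 = n" using eq by linarith
  then have "k ^ 2 - k + 1 = n" by (simp add: power2_eq_square)
  then show ?thesis using k2 by simp
qed

lemma fancy: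
  assumes c: "c \<in> V" and cen: "\<forall>z\<in>V. z \<noteq> c \<longrightarrow> (c, z) \<in> A \<and> d z \<noteq> d c"
  shows "fancy_wheel V A"
proof -
  define W where "W = V - {c}"
  have finW: "finite W" unfolding W_def using fin by simp
  have cardW: "card W = n - 1" unfolding W_def using fin c by simp
  have Nc: "N c = W"
  proof
    show "N c \<subseteq> W" unfolding W_def using Nsub Nself by blast
    show "W \<subseteq> N c" unfolding W_def using cen memN by blast
  qed
  have dc: "d c = n - 1" using Nc cardW by simp
  have Mc: "M c = W"
  proof -
    have sub: "M c \<subseteq> W" unfolding W_def using Msub Mself by blast
    have "card (M c) = card W" using ed[OF c] dc cardW by simp
    then show ?thesis using card_subset_eq[OF finW sub] by simp
  qed
  have d2: "d z = 2" if z: "z \<in> W" for z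
  proof -
    have zV: "z \<in> V" and zc: "z \<noteq> c" using z unfolding W_def by auto
    have "d z \<noteq> d c" using cen zV zc by blast
    then have "d z + d c = n + 1" using sum_deg[OF zV c] by simp
    then show ?thesis using dc n2 by simp
  qed
  have e2: "e z = 2" if z: "z \<in> W" for z
    using ed[of z] d2[OF z] z unfolding W_def by simp
  have uniqc: "v = c" if v: "v \<in> V" "N v = V - {v}" for v
  proof (rule ccontr)
    assume vc: "v \<noteq> c"
    have "d v = n - 1" using v fin by simp
    then have "d v = d c" using dc by simp
    then show False using cen v(1) vc by blast
  qed
  have cinN: "c \<in> N z" if "z \<in> W" for z using Mc that memM memN by blast
  have cinM: "c \<in> M z" if "z \<in> W" for z using Nc that memM memN by blast
  have "\<forall>z\<in>W. \<exists>s. N z - {c} = {s}"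
  proof
    fix z assume z: "z \<in> W"
    have "card (N z - {c}) = 1" using d2[OF z] cinN[OF z] finN by (simp add: card_Diff_singleton)
    then show "\<exists>s. N z - {c} = {s}" by (auto simp: card_1_singleton_iff)
  qed
  then obtain sg where sg: "\<And>z. z \<in> W \<Longrightarrow> N z - {c} = {sg z}" using bchoice[of W "\<lambda>z s. N z - {c} = {s}"] by blast
  have "\<forall>z\<in>W. \<exists>s. M z - {c} = {s}"
  proof
    fix z assume z: "z \<in> W"
    have "card (M z - {c}) = 1" using e2[OF z] cinM[OF z] finM by (simp add: card_Diff_singleton)
    then show "\<exists>s. M z - {c} = {s}" by (auto simp: card_1_singleton_iff)
  qed
  then obtain tg where tg: "\<And>z. z \<in> W \<Longrightarrow> M z - {c} = {tg z}" using bchoice[of W "\<lambda>z s. M z - {c} = {s}"] by blast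
  have sgN: "sg z \<in> N z" "sg z \<noteq> c" if "z \<in> W" for z using sg[OF that] by auto
  have sgW: "sg z \<in> W" if "z \<in> W" for z using sgN[OF that] Nsub unfolding W_def by blast
  have sgne: "sg z \<noteq> z" if "z \<in> W" for z using sgN(1)[OF that] Nself[of z] by auto
  have injsg: "inj_on sg W"
  proof (rule inj_onI)
    fix a b assume a: "a \<in> W" and b: "b \<in> W" and eq: "sg a = sg b"
    have sW: "sg a \<in> W" using sgW[OF a] .
    have "a \<in> M (sg a) - {c}" using sgN[OF a] a memM memN unfolding W_def by auto
    moreover have "b \<in> M (sg a) - {c}" using sgN[OF b] b eq memM memN unfolding W_def by auto
    ultimately show "a = b" using tg[OF sW] by auto
  qed
  have imsg: "sg ` W = W" using endo_inj_surj[OF finW _ injsg] sgW by blast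
  define g where "g = (\<lambda>z. if z \<in> W then sg z else z)"
  have injg: "inj_on g W" using injsg unfolding g_def by (simp add: inj_on_def)
  have img: "g ` W = W" using imsg unfolding g_def by auto
  have perm: "g permutes W"
  proof (rule bij_imp_permutes)
    show "bij_betw g W W" using injg img by (simp add: bij_betw_def)
    fix x assume "x \<notin> W" then show "g x = x" unfolding g_def by simp
  qed
  have nfix: "\<forall>x\<in>W. g x \<noteq> x" using sgne unfolding g_def by simp
  have Bset: "A \<inter> (W \<times> W) = {(x, g x) | x. x \<in> W}"
  proof (intro set_eqI iffI)
    fix ab assume ab: "ab \<in> A \<inter> (W \<times> W)"
    then obtain a b where abe: "ab = (a, b)" "a \<in> W" "b \<in> W" "(a, b) \<in> A" by blast
    have "b \<in> N a - {c}" using abe memN unfolding W_def by auto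
    then have "b = sg a" using sg[OF abe(2)] by simp
    then have "b = g a" using abe(2) unfolding g_def by simp
    then show "ab \<in> {(x, g x) | x. x \<in> W}" using abe by blast
  next
    fix ab assume "ab \<in> {(x, g x) | x. x \<in> W}"
    then obtain a where a: "ab = (a, g a)" "a \<in> W" by blast
    have "g a = sg a" using a(2) unfolding g_def by simp
    then show "ab \<in> A \<inter> (W \<times> W)" using a sgN[OF a(2)] sgW[OF a(2)] memN by auto
  qed
  have duc: "disjoint_union_of_cycles W (A \<inter> (W \<times> W))"
    unfolding Bset by (rule cycle_decomp[OF finW perm nfix])
  show ?thesis unfolding fancy_wheel_def
  proof (intro conjI ballI impI)
    show "digraph V A" by (rule dg)
    show "\<exists>!v. v \<in> V \<and> N v = V - {v} \<and> M v = V - {v}"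
    proof (rule ex1I[of _ c])
      show "c \<in> V \<and> N c = V - {c} \<and> M c = V - {c}" using c Nc Mc unfolding W_def by simp
      fix v assume "v \<in> V \<and> N v = V - {v} \<and> M v = V - {v}"
      then show "v = c" using uniqc[of v] by simp
    qed
    fix v assume "v \<in> V" and "N v = V - {v} \<and> M v = V - {v}"
    then have "v = c" using uniqc[of v] by simp
    then show "disjoint_union_of_cycles (V - {v}) (A \<inter> ((V - {v}) \<times> (V - {v})))"
      using duc unfolding W_def by simp
  qed
qed

theorem main:
  shows "(fancy_wheel V A \<or> regular_digraph V A) \<and>
    (regular_digraph V A \<longrightarrow>
       (\<exists>k::nat. k \<ge> 2 \<and> (\<forall>v\<in>V. card (out_nbrs A v) = k) \<and> card V = k ^ 2 - k + 1))"
proof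
  show "regular_digraph V A \<longrightarrow>
       (\<exists>k::nat. k \<ge> 2 \<and> (\<forall>v\<in>V. card (out_nbrs A v) = k) \<and> card V = k ^ 2 - k + 1)"
  proof
    assume "regular_digraph V A"
    then obtain k where k: "k_regular k V A" unfolding regular_digraph_def by blast
    then have "\<forall>v\<in>V. d v = k" unfolding k_regular_def by blast
    then show "\<exists>k::nat. k \<ge> 2 \<and> (\<forall>v\<in>V. card (out_nbrs A v) = k) \<and> card V = k ^ 2 - k + 1"
      using reg_count[OF k] by blast
  qed
  show "fancy_wheel V A \<or> regular_digraph V A"
  proof (cases "\<forall>u\<in>V. \<forall>v\<in>V. d u = d v")
    case True
    have "V \<noteq> {}" using n2 by auto
    then obtain u where u: "u \<in> V" by blast
    have "V - {u} \<noteq> {}"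
    proof
      assume "V - {u} = {}"
      then have "V = {u}" using u by blast
      then show False using n2 by simp
    qed
    then obtain v where v: "v \<in> V" "v \<noteq> u" by blast
    obtain w where "N u \<inter> N v = {w}" using inter1[OF u v(1)] v(2) by auto
    then have "N u \<noteq> {}" by blast
    then have kpos: "d u > 0" using finN by (simp add: card_gt_0_iff)
    have "k_regular (d u) V A" unfolding k_regular_def
    proof (intro conjI ballI)
      show "digraph V A" by (rule dg)
      fix x assume x: "x \<in> V"
      show dx: "d x = d u" using True x u by blast
      show "e x = d u" using ed[OF x] dx by simp
    qed
    then have "regular_digraph V A" unfolding regular_digraph_def using kpos by blast
    then show ?thesis by blast
  next
    case False
    then obtain u0 v0 where "u0 \<in> V" "v0 \<in> V" "d u0 \<noteq> d v0" by blast
    then obtain c where "c \<in> V" "\<forall>z\<in>V. z \<noteq> c \<longrightarrow> (c, z) \<in> A \<and> d z \<noteq> d c"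
      using center_exists by blast
    then show ?thesis using fancy by simp
  qed
qed

end

theorem theorem1p1:
  fixes V :: "'a set" and A :: "('a \<times> 'a) set"
  assumes "friendship_digraph V A"
  shows "(fancy_wheel V A \<or> regular_digraph V A) \<and>
    (regular_digraph V A \<longrightarrow>
       (\<exists>k::nat. k \<ge> 2 \<and> (\<forall>v\<in>V. card (out_nbrs A v) = k) \<and> card V = k ^ 2 - k + 1))"
  using fd.main[OF fd.intro[OF assms]] .

end
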